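(* Let $\mathbf{M}$ be a right proper model category and let $f:X\to Y$ be a weak equivalence in $\mathbf{M}$. Then the function $f_\ast:\pi_0(\mathbf{Triv}/X)\to\pi_0(\mathbf{Triv}/Y)$, induced by sending an object $W\to X$ to the composite $W\to X\xrightarrow{f}Y$, is a bijection.
   Context: For an object $X$ of $\mathbf{M}$ with terminal object $\ast$, $\mathbf{Triv}/X$ is the category whose objects are morphisms $W\to X$ such that $W\to\ast$ is a weak equivalence, and whose morphisms are commutative triangles over $X$; $\pi_0$ denotes the set of path components. Right proper means weak equivalences are stable under pullback along fibrations. *)

theory Defs
  imports Main
begin

record ('o, 'a) category =
  Obj  :: "'o set"
  Arr  :: "'a set"
  Dom  :: "'a \<Rightarrow> 'o"
  Cod  :: "'a \<Rightarrow> 'o"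
  Id   :: "'o \<Rightarrow> 'a"
  Comp :: "'a \<Rightarrow> 'a \<Rightarrow> 'a"   (* Comp C g f = g \<circ> f, defined when Cod f = Dom g *)

definition hom :: "('o, 'a) category \<Rightarrow> 'o \<Rightarrow> 'o \<Rightarrow> 'a set" where
  "hom C A B = {a \<in> Arr C. Dom C a = A \<and> Cod C a = B}"

definition is_category :: "('o, 'a) category \<Rightarrow> bool" where
  "is_category C \<longleftrightarrow>
     (\<forall>a\<in>Arr C. Dom C a \<in> Obj C \<and> Cod C a \<in> Obj C) \<and>
     (\<forall>A\<in>Obj C. Id C A \<in> hom C A A) \<and>
     (\<forall>f\<in>Arr C. \<forall>g\<in>Arr C. Cod C f = Dom C g \<longrightarrow> Comp C g f \<in> hom C (Dom C f) (Cod C g)) \<and>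
     (\<forall>f\<in>Arr C. \<forall>g\<in>Arr C. \<forall>h\<in>Arr C. Cod C f = Dom C g \<longrightarrow> Cod C g = Dom C h \<longrightarrow>
         Comp C h (Comp C g f) = Comp C (Comp C h g) f) \<and>
     (\<forall>f\<in>Arr C. Comp C (Id C (Cod C f)) f = f \<and> Comp C f (Id C (Dom C f)) = f)"

definition is_terminal :: "('o, 'a) category \<Rightarrow> 'o \<Rightarrow> bool" where
  "is_terminal C T \<longleftrightarrow> T \<in> Obj C \<and> (\<forall>A\<in>Obj C. \<exists>!t. t \<in> hom C A T)"

definition is_initial :: "('o, 'a) category \<Rightarrow> 'o \<Rightarrow> bool" where
  "is_initial C I \<longleftrightarrow> I \<in> Obj C \<and> (\<forall>A\<in>Obj C. \<exists>!t. t \<in> hom C I A)"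

text \<open>Commutative square: q ; g = p ; f, i.e.
  P --q--> E,  P --p--> A,  E --g--> B,  A --f--> B  with g \<circ> q = f \<circ> p.\<close>
definition comm_square :: "('o, 'a) category \<Rightarrow> 'a \<Rightarrow> 'a \<Rightarrow> 'a \<Rightarrow> 'a \<Rightarrow> bool" where
  "comm_square C q p g f \<longleftrightarrow>
     q \<in> Arr C \<and> p \<in> Arr C \<and> g \<in> Arr C \<and> f \<in> Arr C \<and>
     Dom C q = Dom C p \<and> Cod C q = Dom C g \<and> Cod C p = Dom C f \<and> Cod C g = Cod C f \<and>
     Comp C g q = Comp C f p"

definition is_pullback :: "('o, 'a) category \<Rightarrow> 'a \<Rightarrow> 'a \<Rightarrow> 'a \<Rightarrow> 'a \<Rightarrow> bool" where
  "is_pullback C q p g f \<longleftrightarrow> comm_square C q p g f \<and>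
     (\<forall>q' p'. comm_square C q' p' g f \<longrightarrow>
        (\<exists>!u. u \<in> hom C (Dom C q') (Dom C q) \<and> Comp C q u = q' \<and> Comp C p u = p'))"

definition is_pushout :: "('o, 'a) category \<Rightarrow> 'a \<Rightarrow> 'a \<Rightarrow> 'a \<Rightarrow> 'a \<Rightarrow> bool" where
  "is_pushout C q p g f \<longleftrightarrow> comm_square C q p g f \<and>
     (\<forall>g' f'. comm_square C q p g' f' \<longrightarrow>
        (\<exists>!u. u \<in> hom C (Cod C g) (Cod C g') \<and> Comp C u g = g' \<and> Comp C u f = f'))"

definition has_finite_limits :: "('o, 'a) category \<Rightarrow> bool" where
  "has_finite_limits C \<longleftrightarrow> (\<exists>T. is_terminal C T) \<and>
     (\<forall>g\<in>Arr C. \<forall>f\<in>Arr C. Cod C g = Cod C f \<longrightarrow> (\<exists>q p. is_pullback C q p g f))"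

definition has_finite_colimits :: "('o, 'a) category \<Rightarrow> bool" where
  "has_finite_colimits C \<longleftrightarrow> (\<exists>I. is_initial C I) \<and>
     (\<forall>q\<in>Arr C. \<forall>p\<in>Arr C. Dom C q = Dom C p \<longrightarrow> (\<exists>g f. is_pushout C q p g f))"

definition is_retract :: "('o, 'a) category \<Rightarrow> 'a \<Rightarrow> 'a \<Rightarrow> bool" where
  "is_retract C f g \<longleftrightarrow> f \<in> Arr C \<and> g \<in> Arr C \<and>
     (\<exists>i r i' r'. i \<in> hom C (Dom C f) (Dom C g) \<and> r \<in> hom C (Dom C g) (Dom C f) \<and>
        i' \<in> hom C (Cod C f) (Cod C g) \<and> r' \<in> hom C (Cod C g) (Cod C f) \<and>
        Comp C r i = Id C (Dom C f) \<and> Comp C r' i' = Id C (Cod C f) \<and>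
        Comp C g i = Comp C i' f \<and> Comp C f r = Comp C r' g)"

definition has_llp :: "('o, 'a) category \<Rightarrow> 'a \<Rightarrow> 'a \<Rightarrow> bool" where
  "has_llp C i p \<longleftrightarrow>
     (\<forall>u v. u \<in> hom C (Dom C i) (Dom C p) \<longrightarrow> v \<in> hom C (Cod C i) (Cod C p) \<longrightarrow>
        Comp C p u = Comp C v i \<longrightarrow>
        (\<exists>h. h \<in> hom C (Cod C i) (Dom C p) \<and> Comp C h i = u \<and> Comp C p h = v))"

definition model_category ::
  "('o, 'a) category \<Rightarrow> 'a set \<Rightarrow> 'a set \<Rightarrow> 'a set \<Rightarrow> bool" where
  "model_category C W Cof Fib \<longleftrightarrow>
     is_category C \<and>
     W \<subseteq> Arr C \<and> Cof \<subseteq> Arr C \<and> Fib \<subseteq> Arr C \<and>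
     \<comment> \<open>each class contains identities and is closed under composition\<close>
     (\<forall>K\<in>{W, Cof, Fib}. (\<forall>A\<in>Obj C. Id C A \<in> K) \<and>
        (\<forall>f\<in>K. \<forall>g\<in>K. Cod C f = Dom C g \<longrightarrow> Comp C g f \<in> K)) \<and>
     \<comment> \<open>MC1: finite limits and colimits\<close>
     has_finite_limits C \<and> has_finite_colimits C \<and>
     \<comment> \<open>MC2: two-out-of-three\<close>
     (\<forall>f\<in>Arr C. \<forall>g\<in>Arr C. Cod C f = Dom C g \<longrightarrow>
        ((f \<in> W \<and> g \<in> W \<longrightarrow> Comp C g f \<in> W) \<and>
         (f \<in> W \<and> Comp C g f \<in> W \<longrightarrow> g \<in> W) \<and>
         (g \<in> W \<and> Comp C g f \<in> W \<longrightarrow> f \<in> W))) \<and>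
     \<comment> \<open>MC3: retracts\<close>
     (\<forall>K\<in>{W, Cof, Fib}. \<forall>f g. is_retract C f g \<longrightarrow> g \<in> K \<longrightarrow> f \<in> K) \<and>
     \<comment> \<open>MC4: lifting\<close>
     (\<forall>i\<in>Cof \<inter> W. \<forall>p\<in>Fib. has_llp C i p) \<and>
     (\<forall>i\<in>Cof. \<forall>p\<in>Fib \<inter> W. has_llp C i p) \<and>
     \<comment> \<open>MC5: factorizations\<close>
     (\<forall>f\<in>Arr C. \<exists>i p. i \<in> Cof \<inter> W \<and> p \<in> Fib \<and> Cod C i = Dom C p \<and> f = Comp C p i) \<and>
     (\<forall>f\<in>Arr C. \<exists>i p. i \<in> Cof \<and> p \<in> Fib \<inter> W \<and> Cod C i = Dom C p \<and> f = Comp C p i)"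

text \<open>Right proper: in a pullback square (q, p', p, g) with p a fibration and g a weak
  equivalence, the base change q of g along p is a weak equivalence.
  Square: P --q--> E, P --p'--> B', E --p--> B, B' --g--> B.\<close>
definition right_proper ::
  "('o, 'a) category \<Rightarrow> 'a set \<Rightarrow> 'a set \<Rightarrow> 'a set \<Rightarrow> bool" where
  "right_proper C W Cof Fib \<longleftrightarrow> model_category C W Cof Fib \<and>
     (\<forall>q p' p g. is_pullback C p' q g p \<longrightarrow> p \<in> Fib \<longrightarrow> g \<in> W \<longrightarrow> q \<in> W)"

text \<open>Objects of Triv/X (T a chosen terminal object): arrows w : V \<rightarrow> X such that
  the unique arrow V \<rightarrow> T is a weak equivalence.\<close>
definition triv_objs :: "('o, 'a) category \<Rightarrow> 'a set \<Rightarrow> 'o \<Rightarrow> 'o \<Rightarrow> 'a set" where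
  "triv_objs C W T X = {w \<in> Arr C. Cod C w = X \<and> (\<forall>t\<in>hom C (Dom C w) T. t \<in> W)}"

definition triv_hom_rel :: "('o, 'a) category \<Rightarrow> 'a set \<Rightarrow> 'o \<Rightarrow> 'o \<Rightarrow> 'a rel" where
  "triv_hom_rel C W T X = {(w, w'). w \<in> triv_objs C W T X \<and> w' \<in> triv_objs C W T X \<and>
      (\<exists>a. a \<in> hom C (Dom C w) (Dom C w') \<and> Comp C w' a = w)}"

definition conn_rel :: "('o, 'a) category \<Rightarrow> 'a set \<Rightarrow> 'o \<Rightarrow> 'o \<Rightarrow> 'a rel" where
  "conn_rel C W T X = (triv_hom_rel C W T X \<union> (triv_hom_rel C W T X)\<inverse>)\<^sup>*"

definition pi0_triv :: "('o, 'a) category \<Rightarrow> 'a set \<Rightarrow> 'o \<Rightarrow> 'o \<Rightarrow> 'a set set" where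
  "pi0_triv C W T X = triv_objs C W T X // conn_rel C W T X"

definition pi0_push :: "('o, 'a) category \<Rightarrow> 'a set \<Rightarrow> 'o \<Rightarrow> 'o \<Rightarrow> 'a \<Rightarrow> 'a set \<Rightarrow> 'a set" where
  "pi0_push C W T Y f c = (\<Union>w\<in>c. conn_rel C W T Y `` {Comp C f w})"

end

theory Submission
  imports Defs
begin

locale rpc =
  fixes C :: "('o, 'a) category" and W Cof Fib :: "'a set" and T :: 'o
  assumes rp: "right_proper C W Cof Fib" and trm: "is_terminal C T"
begin

lemma mc: "model_category C W Cof Fib" using rp unfolding right_proper_def by simp
lemma cat: "is_category C" using mc unfolding model_category_def by simp
lemma WA: "W \<subseteq> Arr C" and CofA: "Cof \<subseteq> Arr C" and FibA: "Fib \<subseteq> Arr C"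
  using mc unfolding model_category_def by simp_all

lemma dc_obj: "a \<in> Arr C \<Longrightarrow> Dom C a \<in> Obj C \<and> Cod C a \<in> Obj C"
  using cat unfolding is_category_def by blast
lemma id_hom: "A \<in> Obj C \<Longrightarrow> Id C A \<in> hom C A A"
  using cat unfolding is_category_def by blast
lemma comp_hom: "f \<in> Arr C \<Longrightarrow> g \<in> Arr C \<Longrightarrow> Cod C f = Dom C g \<Longrightarrow>
    Comp C g f \<in> hom C (Dom C f) (Cod C g)"
  using cat unfolding is_category_def by blast
lemma comp_arr: "f \<in> Arr C \<Longrightarrow> g \<in> Arr C \<Longrightarrow> Cod C f = Dom C g \<Longrightarrow> Comp C g f \<in> Arr C"
  and dom_comp: "f \<in> Arr C \<Longrightarrow> g \<in> Arr C \<Longrightarrow> Cod C f = Dom C g \<Longrightarrow> Dom C (Comp C g f) = Dom C f"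
  and cod_comp: "f \<in> Arr C \<Longrightarrow> g \<in> Arr C \<Longrightarrow> Cod C f = Dom C g \<Longrightarrow> Cod C (Comp C g f) = Cod C g"
  using comp_hom unfolding hom_def by auto
lemma assoc: "f \<in> Arr C \<Longrightarrow> g \<in> Arr C \<Longrightarrow> h \<in> Arr C \<Longrightarrow> Cod C f = Dom C g \<Longrightarrow> Cod C g = Dom C h \<Longrightarrow>
         Comp C h (Comp C g f) = Comp C (Comp C h g) f"
  using cat unfolding is_category_def by blast
lemma id_r: "f \<in> Arr C \<Longrightarrow> Comp C f (Id C (Dom C f)) = f"
  using cat unfolding is_category_def by blast

lemma W_comp: "f \<in> W \<Longrightarrow> g \<in> W \<Longrightarrow> Cod C f = Dom C g \<Longrightarrow> Comp C g f \<in> W"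
  using mc unfolding model_category_def by simp
lemma W_23: "f \<in> W \<Longrightarrow> g \<in> Arr C \<Longrightarrow> Cod C f = Dom C g \<Longrightarrow> Comp C g f \<in> W \<Longrightarrow> g \<in> W"
proof -
  assume a: "f \<in> W" "g \<in> Arr C" "Cod C f = Dom C g" "Comp C g f \<in> W"
  have "\<forall>f\<in>Arr C. \<forall>g\<in>Arr C. Cod C f = Dom C g \<longrightarrow> (f \<in> W \<and> Comp C g f \<in> W \<longrightarrow> g \<in> W)"
    using mc unfolding model_category_def by blast
  then show "g \<in> W" using a WA by blast
qed

lemma term_ex: "A \<in> Obj C \<Longrightarrow> \<exists>t. t \<in> hom C A T"
  using trm unfolding is_terminal_def by blast
lemma term_uniq: "A \<in> Obj C \<Longrightarrow> t \<in> hom C A T \<Longrightarrow> t' \<in> hom C A T \<Longrightarrow> t = t'"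
  using trm unfolding is_terminal_def by blast

lemma pb_ex: "g \<in> Arr C \<Longrightarrow> f \<in> Arr C \<Longrightarrow> Cod C g = Cod C f \<Longrightarrow> \<exists>q p. is_pullback C q p g f"
  using mc unfolding model_category_def has_finite_limits_def by blast
lemma right_prop: "is_pullback C p' q g p \<Longrightarrow> p \<in> Fib \<Longrightarrow> g \<in> W \<Longrightarrow> q \<in> W"
  using rp unfolding right_proper_def by blast
lemma fact: "a \<in> Arr C \<Longrightarrow> \<exists>i p. i \<in> Cof \<inter> W \<and> p \<in> Fib \<and> Cod C i = Dom C p \<and> a = Comp C p i"
  using mc unfolding model_category_def by blast
lemma lift: "i \<in> Cof \<inter> W \<Longrightarrow> p \<in> Fib \<Longrightarrow> has_llp C i p"
  using mc unfolding model_category_def by blast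

lemma contr_comp:
  assumes "v \<in> W" "\<forall>t\<in>hom C (Cod C v) T. t \<in> W"
  shows "\<forall>t\<in>hom C (Dom C v) T. t \<in> W"
proof
  fix t assume t: "t \<in> hom C (Dom C v) T"
  have v: "v \<in> Arr C" using assms WA by blast
  obtain t' where t': "t' \<in> hom C (Cod C v) T" using term_ex dc_obj v by blast
  have "Comp C t' v \<in> hom C (Dom C v) T" using comp_hom[of v t'] t' v unfolding hom_def by auto
  then have "t = Comp C t' v" using term_uniq t dc_obj v by blast
  moreover have "t' \<in> W" using t' assms by blast
  ultimately show "t \<in> W" using W_comp assms t' unfolding hom_def by auto
qed

lemma contr_back:
  assumes "j \<in> W" "\<forall>t\<in>hom C (Dom C j) T. t \<in> W"
  shows "\<forall>t\<in>hom C (Cod C j) T. t \<in> W"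
proof
  fix t assume t: "t \<in> hom C (Cod C j) T"
  have j: "j \<in> Arr C" using assms WA by blast
  have "Comp C t j \<in> hom C (Dom C j) T" using comp_hom[of j t] t j unfolding hom_def by auto
  then have "Comp C t j \<in> W" using assms by blast
  then show "t \<in> W" using W_23[of j t] assms t unfolding hom_def by auto
qed

abbreviation TO where "TO X \<equiv> triv_objs C W T X"
abbreviation cn where "cn X \<equiv> conn_rel C W T X"
abbreviation ed where "ed X \<equiv> triv_hom_rel C W T X"

lemma cn_sym: "(a, b) \<in> cn X \<Longrightarrow> (b, a) \<in> cn X"
  unfolding conn_rel_def
  by (metis converse_Un converse_converse rtrancl_converseI sup_commute)

lemma cn_trans: "(a, b) \<in> cn X \<Longrightarrow> (b, c) \<in> cn X \<Longrightarrow> (a, c) \<in> cn X"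
  unfolding conn_rel_def by (rule rtrancl_trans)

lemma ed_cn: "(a, b) \<in> ed X \<Longrightarrow> (a, b) \<in> cn X"
  unfolding conn_rel_def by auto

lemma cn_refl: "(a, a) \<in> cn X"
  unfolding conn_rel_def by auto

lemma class_eq: "(a, b) \<in> cn X \<Longrightarrow> cn X `` {a} = cn X `` {b}"
  using cn_sym cn_trans by blast

definition rel where
  "rel f Y w u \<longleftrightarrow> u \<in> TO Y \<and> (\<exists>j p b. j \<in> Cof \<inter> W \<and> p \<in> Fib \<and> Cod C j = Dom C p \<and> u = Comp C p j
      \<and> b \<in> hom C (Dom C w) (Dom C p) \<and> Comp C p b = Comp C f w)"

lemma fact_TO:
  assumes "u \<in> TO Y" "j \<in> Cof \<inter> W" "p \<in> Fib" "Cod C j = Dom C p" "u = Comp C p j"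
  shows "p \<in> TO Y" and "j \<in> Arr C" "p \<in> Arr C" "Dom C j = Dom C u"
proof -
  show j: "j \<in> Arr C" using assms WA by blast
  show p: "p \<in> Arr C" using assms FibA by blast
  show "Dom C j = Dom C u" using assms dom_comp j p by simp
  have "Cod C p = Y" using assms cod_comp j p unfolding triv_objs_def by simp
  moreover have "\<forall>t\<in>hom C (Dom C j) T. t \<in> W" using assms dom_comp j p unfolding triv_objs_def by simp
  ultimately show "p \<in> TO Y" using contr_back[of j] assms p unfolding triv_objs_def by auto
qed

lemma fw_TO: "w \<in> TO X \<Longrightarrow> f \<in> hom C X Y \<Longrightarrow> Comp C f w \<in> TO Y"
  unfolding triv_objs_def hom_def using comp_arr dom_comp cod_comp by auto

lemma keyK:
  assumes f: "f \<in> hom C X Y" "f \<in> W" and p: "p \<in> Fib" "p \<in> TO Y"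
    and w: "w1 \<in> TO X" "w2 \<in> TO X"
    and b: "b1 \<in> hom C (Dom C w1) (Dom C p)" "Comp C p b1 = Comp C f w1"
           "b2 \<in> hom C (Dom C w2) (Dom C p)" "Comp C p b2 = Comp C f w2"
  shows "(w1, w2) \<in> cn X"
proof -
  have fa: "f \<in> Arr C" "Dom C f = X" "Cod C f = Y" using f unfolding hom_def by auto
  have pa: "p \<in> Arr C" "Cod C p = Y" using p FibA unfolding triv_objs_def by auto
  obtain x v where pb: "is_pullback C x v f p" using pb_ex fa pa by metis
  have vW: "v \<in> W" using right_prop pb p f by blast
  have sq: "x \<in> Arr C" "v \<in> Arr C" "Dom C x = Dom C v" "Cod C x = X" "Cod C v = Dom C p"
    "Comp C f x = Comp C p v"
    using pb fa unfolding is_pullback_def comm_square_def by auto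
  have xT: "x \<in> TO X"
    using contr_comp[OF vW] sq p unfolding triv_objs_def by auto
  have univ: "\<And>q' p'. comm_square C q' p' f p \<Longrightarrow>
        (\<exists>u. u \<in> hom C (Dom C q') (Dom C x) \<and> Comp C x u = q')"
    using pb unfolding is_pullback_def by blast
  have e1: "(w1, x) \<in> ed X"
  proof -
    have "comm_square C w1 b1 f p"
      using w b fa pa unfolding comm_square_def triv_objs_def hom_def by auto
    then show ?thesis using univ w xT unfolding triv_hom_rel_def by blast
  qed
  have e2: "(w2, x) \<in> ed X"
  proof -
    have "comm_square C w2 b2 f p"
      using w b fa pa unfolding comm_square_def triv_objs_def hom_def by auto
    then show ?thesis using univ w xT unfolding triv_hom_rel_def by blast
  qed
  show ?thesis using ed_cn[OF e1] cn_sym[OF ed_cn[OF e2]] cn_trans by blast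
qed

lemma exist_rel:
  assumes f: "f \<in> hom C X Y" "f \<in> W" and u: "u \<in> TO Y"
  shows "\<exists>w \<in> TO X. rel f Y w u"
proof -
  have fa: "f \<in> Arr C" "Dom C f = X" "Cod C f = Y" using f unfolding hom_def by auto
  have ua: "u \<in> Arr C" using u unfolding triv_objs_def by auto
  obtain j p where jp: "j \<in> Cof \<inter> W" "p \<in> Fib" "Cod C j = Dom C p" "u = Comp C p j"
    using fact ua by blast
  note ft = fact_TO[OF u jp]
  have pa: "p \<in> Arr C" "Cod C p = Y" using ft unfolding triv_objs_def by auto
  obtain x v where pb: "is_pullback C x v f p" using pb_ex fa pa by metis
  have vW: "v \<in> W" using right_prop pb jp f by blast
  have sq: "x \<in> Arr C" "v \<in> Arr C" "Dom C x = Dom C v" "Cod C x = X" "Cod C v = Dom C p"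
    "Comp C f x = Comp C p v"
    using pb fa unfolding is_pullback_def comm_square_def by auto
  have xT: "x \<in> TO X"
    using contr_comp[OF vW] sq ft unfolding triv_objs_def by auto
  have "rel f Y x u" unfolding rel_def
    using u jp sq unfolding hom_def by auto
  then show ?thesis using xT by blast
qed

lemma rel_cn:
  assumes f: "f \<in> hom C X Y" and w: "w \<in> TO X" and r: "rel f Y w u"
  shows "(Comp C f w, u) \<in> cn Y"
proof -
  obtain j p b where jp: "j \<in> Cof \<inter> W" "p \<in> Fib" "Cod C j = Dom C p" "u = Comp C p j"
    and b: "b \<in> hom C (Dom C w) (Dom C p)" "Comp C p b = Comp C f w" and u: "u \<in> TO Y"
    using r unfolding rel_def by blast
  note ft = fact_TO[OF u jp]
  have fw: "Comp C f w \<in> TO Y" using fw_TO w f .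
  have dfw: "Dom C (Comp C f w) = Dom C w" using fw_TO w f unfolding triv_objs_def hom_def
    using dom_comp by auto
  have e1: "(Comp C f w, p) \<in> ed Y" unfolding triv_hom_rel_def using fw ft b dfw by auto
  have e2: "(u, p) \<in> ed Y" unfolding triv_hom_rel_def using u ft jp unfolding hom_def by auto
  show ?thesis using ed_cn[OF e1] cn_sym[OF ed_cn[OF e2]] cn_trans by blast
qed

lemma edgeE:
  assumes f: "f \<in> hom C X Y" "f \<in> W" and e: "(u1, u2) \<in> ed Y"
    and r1: "rel f Y w1 u1" and r2: "rel f Y w2 u2" and w: "w1 \<in> TO X" "w2 \<in> TO X"
  shows "(w1, w2) \<in> cn X"
proof -
  obtain j1 p1 b1 where jp1: "j1 \<in> Cof \<inter> W" "p1 \<in> Fib" "Cod C j1 = Dom C p1" "u1 = Comp C p1 j1"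
    and b1: "b1 \<in> hom C (Dom C w1) (Dom C p1)" "Comp C p1 b1 = Comp C f w1" and u1: "u1 \<in> TO Y"
    using r1 unfolding rel_def by blast
  obtain j2 p2 b2 where jp2: "j2 \<in> Cof \<inter> W" "p2 \<in> Fib" "Cod C j2 = Dom C p2" "u2 = Comp C p2 j2"
    and b2: "b2 \<in> hom C (Dom C w2) (Dom C p2)" "Comp C p2 b2 = Comp C f w2" and u2: "u2 \<in> TO Y"
    using r2 unfolding rel_def by blast
  note ft1 = fact_TO[OF u1 jp1]
  note ft2 = fact_TO[OF u2 jp2]
  obtain a where a: "a \<in> hom C (Dom C u1) (Dom C u2)" "Comp C u2 a = u1"
    using e unfolding triv_hom_rel_def by blast
  have aa: "a \<in> Arr C" "Dom C a = Dom C u1" "Cod C a = Dom C u2" using a unfolding hom_def by auto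
  have llp: "has_llp C j1 p2" using lift jp1 jp2 by blast
  have ja: "Comp C j2 a \<in> hom C (Dom C j1) (Dom C p2)"
    using comp_hom[of a j2] aa ft1 ft2 jp2 by simp
  have cp1: "Cod C p1 = Y" "Cod C p2 = Y" using ft1 ft2 unfolding triv_objs_def by auto
  have p1h: "p1 \<in> hom C (Cod C j1) (Cod C p2)" using ft1 jp1 cp1 unfolding hom_def by auto
  have sqc: "Comp C p2 (Comp C j2 a) = Comp C p1 j1"
    using assoc[of a j2 p2] aa ft2 jp2 a jp1 by simp
  obtain h where h: "h \<in> hom C (Cod C j1) (Dom C p2)" "Comp C p2 h = p1"
    using llp ja p1h sqc unfolding has_llp_def by blast
  have ha: "h \<in> Arr C" "Dom C h = Dom C p1" "Cod C h = Dom C p2" using h jp1 unfolding hom_def by auto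
  have b1a: "b1 \<in> Arr C" "Dom C b1 = Dom C w1" "Cod C b1 = Dom C p1" using b1 unfolding hom_def by auto
  have hb: "Comp C h b1 \<in> hom C (Dom C w1) (Dom C p2)" using comp_hom[of b1 h] ha b1a by simp
  have hb2: "Comp C p2 (Comp C h b1) = Comp C f w1"
    using assoc[of b1 h p2] ha b1a ft2 h b1 by simp
  show ?thesis using keyK[OF f jp2(2) ft2(1) w hb hb2 b2] .
qed

lemma inj_main:
  assumes f: "f \<in> hom C X Y" "f \<in> W" and c: "(u, u') \<in> cn Y"
  shows "\<forall>w w'. w \<in> TO X \<longrightarrow> w' \<in> TO X \<longrightarrow> rel f Y w u \<longrightarrow> rel f Y w' u' \<longrightarrow> (w, w') \<in> cn X"
  using c[unfolded conn_rel_def]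
proof (induction rule: rtrancl_induct)
  case base
  show ?case
  proof (intro allI impI)
    fix w w' assume a: "w \<in> TO X" "w' \<in> TO X" "rel f Y w u" "rel f Y w' u"
    have uT: "u \<in> TO Y" using a rel_def by blast
    have "(u, u) \<in> ed Y" unfolding triv_hom_rel_def using uT id_hom id_r dc_obj
      unfolding triv_objs_def by blast
    then show "(w, w') \<in> cn X" using edgeE f a by blast
  qed
next
  case (step y z)
  show ?case
  proof (intro allI impI)
    fix w w'' assume a: "w \<in> TO X" "w'' \<in> TO X" "rel f Y w u" "rel f Y w'' z"
    have yT: "y \<in> TO Y" using step(2) unfolding triv_hom_rel_def by blast
    obtain w' where w': "w' \<in> TO X" "rel f Y w' y" using exist_rel f yT by blast
    have 1: "(w, w') \<in> cn X" using step(3) a w' by blast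
    have 2: "(w', w'') \<in> cn X"
    proof (cases "(y, z) \<in> ed Y")
      case True
      then show ?thesis using edgeE f w' a by blast
    next
      case False
      then have "(z, y) \<in> ed Y" using step(2) by blast
      then show ?thesis using edgeE f w' a cn_sym by blast
    qed
    show "(w, w'') \<in> cn X" using 1 2 cn_trans by blast
  qed
qed

lemma push_cn:
  assumes f: "f \<in> hom C X Y" and c: "(w, w') \<in> cn X"
  shows "(Comp C f w, Comp C f w') \<in> cn Y"
proof -
  have edge: "(Comp C f a, Comp C f b) \<in> ed Y" if e: "(a, b) \<in> ed X" for a b
  proof -
    obtain g where g: "g \<in> hom C (Dom C a) (Dom C b)" "Comp C b g = a" and ab: "a \<in> TO X" "b \<in> TO X"
      using e unfolding triv_hom_rel_def by blast
    have fa: "f \<in> Arr C" "Dom C f = X" using f unfolding hom_def by auto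
    have ba: "b \<in> Arr C" "Cod C b = X" using ab unfolding triv_objs_def by auto
    have ga: "g \<in> Arr C" "Cod C g = Dom C b" using g unfolding hom_def by auto
    have "Comp C (Comp C f b) g = Comp C f a" using assoc[of g b f] fa ba ga g by simp
    moreover have "Dom C (Comp C f a) = Dom C a" "Dom C (Comp C f b) = Dom C b"
      using ab fa dom_comp unfolding triv_objs_def by auto
    ultimately show ?thesis unfolding triv_hom_rel_def using fw_TO[OF ab(1) f] fw_TO[OF ab(2) f] g
      by auto
  qed
  show ?thesis using c unfolding conn_rel_def
  proof (induction rule: rtrancl_induct)
    case base then show ?case by simp
  next
    case (step y z)
    then show ?case using edge
      by (metis (no_types, lifting) Un_iff converse_iff rtrancl.rtrancl_into_rtrancl)
  qed
qed

lemma push_class: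
  assumes f: "f \<in> hom C X Y"
  shows "pi0_push C W T Y f (cn X `` {w}) = cn Y `` {Comp C f w}"
proof -
  have "\<And>w'. w' \<in> cn X `` {w} \<Longrightarrow> cn Y `` {Comp C f w'} = cn Y `` {Comp C f w}"
    using push_cn[OF f] class_eq by (metis Image_singleton_iff)
  moreover have "w \<in> cn X `` {w}" using cn_refl by blast
  ultimately show ?thesis unfolding pi0_push_def by blast
qed

end

theorem mainTheorem13:
  fixes C :: "('o, 'a) category" and W Cof Fib :: "'a set" and T X Y :: 'o and f :: 'a
  assumes "right_proper C W Cof Fib"
    and "is_terminal C T"
    and "f \<in> hom C X Y"
    and "f \<in> W"
  shows "bij_betw (pi0_push C W T Y f) (pi0_triv C W T X) (pi0_triv C W T Y)"
proof -
  interpret rpc C W Cof Fib T using assms by unfold_locales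
  have f: "f \<in> hom C X Y" "f \<in> W" using assms by auto
  have rel_self: "rel f Y w (Comp C f w)" if w: "w \<in> TO X" for w
  proof -
    have fw: "Comp C f w \<in> TO Y" using fw_TO w f by blast
    have fwa: "Comp C f w \<in> Arr C" using fw unfolding triv_objs_def by auto
    obtain j p where jp: "j \<in> Cof \<inter> W" "p \<in> Fib" "Cod C j = Dom C p" "Comp C f w = Comp C p j"
      using fact fwa by blast
    note ft = fact_TO[OF fw jp]
    have "Dom C (Comp C f w) = Dom C w" using f w dom_comp unfolding hom_def triv_objs_def by auto
    then have "j \<in> hom C (Dom C w) (Dom C p)" using ft jp unfolding hom_def by auto
    then show ?thesis unfolding rel_def using fw jp by auto
  qed
  show ?thesis unfolding bij_betw_def
  proof
    show "inj_on (pi0_push C W T Y f) (pi0_triv C W T X)"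
    proof (rule inj_onI)
      fix c1 c2 assume c: "c1 \<in> pi0_triv C W T X" "c2 \<in> pi0_triv C W T X"
        and eq: "pi0_push C W T Y f c1 = pi0_push C W T Y f c2"
      obtain w1 where w1: "w1 \<in> TO X" "c1 = cn X `` {w1}" using c unfolding pi0_triv_def
        by (auto elim: quotientE)
      obtain w2 where w2: "w2 \<in> TO X" "c2 = cn X `` {w2}" using c unfolding pi0_triv_def
        by (auto elim: quotientE)
      have "cn Y `` {Comp C f w1} = cn Y `` {Comp C f w2}"
        using eq w1 w2 push_class f by simp
      then have "(Comp C f w1, Comp C f w2) \<in> cn Y" using cn_refl by blast
      then have "(w1, w2) \<in> cn X" using inj_main[OF f] rel_self w1 w2 by blast
      then show "c1 = c2" using w1 w2 class_eq by simp
    qed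
  next
    show "pi0_push C W T Y f ` pi0_triv C W T X = pi0_triv C W T Y"
    proof
      show "pi0_push C W T Y f ` pi0_triv C W T X \<subseteq> pi0_triv C W T Y"
      proof
        fix d assume "d \<in> pi0_push C W T Y f ` pi0_triv C W T X"
        then obtain w where w: "w \<in> TO X" "d = pi0_push C W T Y f (cn X `` {w})"
          unfolding pi0_triv_def by (auto elim: quotientE)
        then have "d = cn Y `` {Comp C f w}" using push_class f by simp
        then show "d \<in> pi0_triv C W T Y" unfolding pi0_triv_def
          using fw_TO[OF w(1) f(1)] by (auto intro: quotientI)
      qed
    next
      show "pi0_triv C W T Y \<subseteq> pi0_push C W T Y f ` pi0_triv C W T X"
      proof
        fix d assume "d \<in> pi0_triv C W T Y"
        then obtain u where u: "u \<in> TO Y" "d = cn Y `` {u}" unfolding pi0_triv_def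
          by (auto elim: quotientE)
        obtain w where w: "w \<in> TO X" "rel f Y w u" using exist_rel f u by blast
        have "(Comp C f w, u) \<in> cn Y" using rel_cn f w by blast
        then have "d = pi0_push C W T Y f (cn X `` {w})" using push_class f u class_eq by simp
        moreover have "cn X `` {w} \<in> pi0_triv C W T X" unfolding pi0_triv_def
          using w by (auto intro: quotientI)
        ultimately show "d \<in> pi0_push C W T Y f ` pi0_triv C W T X" by blast
      qed
    qed
  qed
qed

end
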